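(* Let $|\psi\rangle\in\mathcal{H}'$ be a pure state with $\langle\psi|\hat N^2|\psi\rangle<\infty$, and let $\{\mathcal{E}_\mu\}$ be a U(1)-invariant measurement such that for every outcome $\mu$ with $w_\mu:=\mathrm{Tr}\,\mathcal{E}_\mu(|\psi\rangle\langle\psi|)>0$ one has $\mathcal{E}_\mu(|\psi\rangle\langle\psi|)=w_\mu|\phi_\mu\rangle\langle\phi_\mu|$ for a pure state $|\phi_\mu\rangle$ with $\langle\phi_\mu|\hat N^2|\phi_\mu\rangle<\infty$. Then $$\sum_\mu w_\mu V(|\phi_\mu\rangle)\le V(|\psi\rangle),\qquad V(|\chi\rangle):=4\big(\langle\chi|\hat N^2|\chi\rangle-\langle\chi|\hat N|\chi\rangle^2\big).$$ That is, $V$ is an ensemble U(1)-frameness monotone.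
   Context: Let $\mathcal{H}'$ be the Hilbert space with orthonormal basis $\{|n\rangle: n=0,1,2,\dots\}$, $\hat N=\sum_n n|n\rangle\langle n|$, and U(1) acts by $T(\phi)=e^{i\phi\hat N}$. A U(1)-invariant operation is a completely positive, trace-nonincreasing linear map $\mathcal{E}$ on operators on $\mathcal{H}'$ with $\mathcal{E}(T(\phi)XT(\phi)^\dagger)=T(\phi)\mathcal{E}(X)T(\phi)^\dagger$ for all $\phi,X$. A U(1)-invariant measurement is a (countable) family $\{\mathcal{E}_\mu\}$ of U(1)-invariant operations whose sum $\sum_\mu\mathcal{E}_\mu$ is trace-preserving; outcome $\mu$ occurs on input $\rho$ with probability $\mathrm{Tr}\,\mathcal{E}_\mu(\rho)$. *)

theory Defs
  imports "HOL-Analysis.Analysis"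
begin

text \<open>Operators on H' = l2(nat) are represented by their (infinite) matrices
  in the number basis |n>, vectors by their coefficient sequences.\<close>

type_synonym mat = "nat \<Rightarrow> nat \<Rightarrow> complex"

definition pos_mat :: "mat \<Rightarrow> bool" where
  "pos_mat X \<longleftrightarrow> (\<forall>S v. finite S \<longrightarrow>
     (let q = (\<Sum>i\<in>S. \<Sum>j\<in>S. cnj (v i) * X i j * v j) in Im q = 0 \<and> Re q \<ge> 0))"

text \<open>Positive trace-class operators (positivity plus summable diagonal implies
  boundedness and trace class).\<close>
definition pos_tc :: "mat \<Rightarrow> bool" where
  "pos_tc X \<longleftrightarrow> pos_mat X \<and> summable (\<lambda>n. Re (X n n))"

definition trace_class :: "mat set" where
  "trace_class = {X. \<exists>A B C D. pos_tc A \<and> pos_tc B \<and> pos_tc C \<and> pos_tc D \<and>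
      X = (\<lambda>i j. (A i j - B i j) + \<i> * (C i j - D i j))}"

definition trace :: "mat \<Rightarrow> complex" where
  "trace X = (\<Sum>\<^sub>\<infinity>n. X n n)"

text \<open>Positivity of a k x k block operator on C^k (x) H'.\<close>
definition pos_block :: "nat \<Rightarrow> (nat \<Rightarrow> nat \<Rightarrow> mat) \<Rightarrow> bool" where
  "pos_block k Y \<longleftrightarrow> (\<forall>S v. finite S \<longrightarrow>
     (let q = (\<Sum>a<k. \<Sum>b<k. \<Sum>i\<in>S. \<Sum>j\<in>S. cnj (v a i) * Y a b i j * v b j)
      in Im q = 0 \<and> Re q \<ge> 0))"

definition linear_tc :: "(mat \<Rightarrow> mat) \<Rightarrow> bool" where
  "linear_tc E \<longleftrightarrow>
     (\<forall>X\<in>trace_class. E X \<in> trace_class) \<and>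
     (\<forall>X\<in>trace_class. \<forall>Y\<in>trace_class. E (\<lambda>i j. X i j + Y i j) = (\<lambda>i j. E X i j + E Y i j)) \<and>
     (\<forall>X\<in>trace_class. \<forall>c. E (\<lambda>i j. c * X i j) = (\<lambda>i j. c * E X i j))"

text \<open>Complete positivity: id_k (x) E maps positive (trace-class) block operators
  to positive block operators, for every k.\<close>
definition completely_positive :: "(mat \<Rightarrow> mat) \<Rightarrow> bool" where
  "completely_positive E \<longleftrightarrow>
     (\<forall>k Y. pos_block k Y \<and> (\<forall>a<k. pos_tc (Y a a)) \<longrightarrow> pos_block k (\<lambda>a b. E (Y a b)))"

definition trace_nonincreasing :: "(mat \<Rightarrow> mat) \<Rightarrow> bool" where
  "trace_nonincreasing E \<longleftrightarrow> (\<forall>X. pos_tc X \<longrightarrow> Re (trace (E X)) \<le> Re (trace X))"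

text \<open>T(phi) X T(phi)^dagger with T(phi) = exp(i phi N).\<close>
definition rot :: "real \<Rightarrow> mat \<Rightarrow> mat" where
  "rot \<phi> X = (\<lambda>m n. cis (\<phi> * real m) * X m n * cis (- \<phi> * real n))"

definition u1_operation :: "(mat \<Rightarrow> mat) \<Rightarrow> bool" where
  "u1_operation E \<longleftrightarrow> linear_tc E \<and> completely_positive E \<and> trace_nonincreasing E \<and>
     (\<forall>\<phi>. \<forall>X\<in>trace_class. E (rot \<phi> X) = rot \<phi> (E X))"

definition u1_measurement :: "('m::countable \<Rightarrow> mat \<Rightarrow> mat) \<Rightarrow> bool" where
  "u1_measurement E \<longleftrightarrow> (\<forall>\<mu>. u1_operation (E \<mu>)) \<and>
     (\<forall>X\<in>trace_class. ((\<lambda>\<mu>. trace (E \<mu> X)) has_sum trace X) UNIV)"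

definition unit_vec :: "(nat \<Rightarrow> complex) \<Rightarrow> bool" where
  "unit_vec x \<longleftrightarrow> ((\<lambda>n. (cmod (x n))\<^sup>2) has_sum 1) UNIV"

definition fin_N2 :: "(nat \<Rightarrow> complex) \<Rightarrow> bool" where
  "fin_N2 x \<longleftrightarrow> (\<lambda>n. (real n)\<^sup>2 * (cmod (x n))\<^sup>2) summable_on UNIV"

definition proj :: "(nat \<Rightarrow> complex) \<Rightarrow> mat" where
  "proj x = (\<lambda>m n. x m * cnj (x n))"

definition expN :: "(nat \<Rightarrow> complex) \<Rightarrow> real" where
  "expN x = (\<Sum>\<^sub>\<infinity>n. real n * (cmod (x n))\<^sup>2)"

definition expN2 :: "(nat \<Rightarrow> complex) \<Rightarrow> real" where
  "expN2 x = (\<Sum>\<^sub>\<infinity>n. (real n)\<^sup>2 * (cmod (x n))\<^sup>2)"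

definition Vfr :: "(nat \<Rightarrow> complex) \<Rightarrow> real" where
  "Vfr x = 4 * (expN2 x - (expN x)\<^sup>2)"

definition outcome_weight :: "('m \<Rightarrow> mat \<Rightarrow> mat) \<Rightarrow> (nat \<Rightarrow> complex) \<Rightarrow> 'm \<Rightarrow> real" where
  "outcome_weight E \<psi> \<mu> = Re (trace (E \<mu> (proj \<psi>)))"

end

theory Submission
  imports Defs "HOL-Real_Asymp.Real_Asymp"
begin


lemma infsum_suminf_nat: "f summable_on (UNIV::nat set) \<Longrightarrow> infsum f UNIV = suminf f"
  by (metis has_sum_imp_sums has_sum_infsum sums_unique)

lemma one_minus_cos_le: "1 - cos (t::real) \<le> t\<^sup>2 / 2"
proof -
  have "cos t = 1 - 2 * sin (t/2) ^ 2" using cos_double_sin[of "t/2"] by simp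
  moreover have "sin (t/2) ^ 2 \<le> (t/2)^2"
    using abs_sin_x_le_abs_x[of "t/2"] by (metis abs_ge_zero power2_abs power_mono)
  ultimately show ?thesis by (simp add: power_divide)
qed

lemma lim_cos_term: "((\<lambda>t::real. (1 - cos (t*k))/t^2) \<longlongrightarrow> k*k/2) (at 0)"
proof (cases "k = 0")
  case True then show ?thesis by simp
next
  case False then show ?thesis by real_asymp
qed

lemma lim_sin_term: "((\<lambda>t::real. sin (t*k)/t) \<longlongrightarrow> k) (at 0)"
proof (cases "k = 0")
  case True then show ?thesis by simp
next
  case False then show ?thesis by real_asymp
qed

definition Gm :: "(nat \<Rightarrow> complex) \<Rightarrow> real \<Rightarrow> complex" where
  "Gm x t = (\<Sum>\<^sub>\<infinity>n. complex_of_real ((cmod (x n))\<^sup>2) * cis (- t * real n))"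

locale uvec =
  fixes x :: "nat \<Rightarrow> complex"
  assumes unit: "unit_vec x" and fin: "fin_N2 x"
begin

definition q where "q n = (cmod (x n))\<^sup>2"
definition m where "m = expN x"
definition V where "V = expN2 x - m\<^sup>2"

lemma q_nonneg: "q n \<ge> 0" by (simp add: q_def)

lemma q_sums: "q sums 1"
  using unit unfolding unit_vec_def q_def by (intro has_sum_imp_sums) (simp add: fun_eq_iff)

lemma q_summ: "summable q" using q_sums by (simp add: sums_summable)

lemma n2_summ: "summable (\<lambda>n. (real n)\<^sup>2 * q n)"
  using fin unfolding fin_N2_def q_def by (simp add: summable_on_imp_summable)

lemma n2_sum: "(\<Sum>n. (real n)\<^sup>2 * q n) = expN2 x"
  using fin unfolding fin_N2_def q_def expN2_def by (simp add: infsum_suminf_nat)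

lemma n1_summ: "summable (\<lambda>n. real n * q n)"
proof (rule summable_comparison_test[OF _ summable_add[OF n2_summ q_summ]])
  show "\<exists>N. \<forall>n\<ge>N. norm (real n * q n) \<le> (real n)\<^sup>2 * q n + q n"
  proof (intro exI allI impI)
    fix n :: nat
    have "real n \<le> (real n)\<^sup>2 + 1" using zero_le_power2[of "real n - 1/2"] by (simp add: power2_eq_square algebra_simps)
    then have "real n * q n \<le> ((real n)\<^sup>2 + 1) * q n" by (intro mult_right_mono q_nonneg)
    then show "norm (real n * q n) \<le> (real n)\<^sup>2 * q n + q n"
      using q_nonneg[of n] by (simp add: algebra_simps)
  qed
qed

lemma n1_sum: "(\<Sum>n. real n * q n) = m"
proof -
  have "(\<lambda>n. real n * q n) summable_on UNIV"
    using n1_summ by (simp add: summable_on_UNIV_nonneg_real_iff q_nonneg)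
  then show ?thesis unfolding m_def expN_def q_def by (simp add: infsum_suminf_nat q_def)
qed

lemma var_summ: "summable (\<lambda>n. q n * (real n - m)\<^sup>2)"
  and var_sum: "(\<Sum>n. q n * (real n - m)\<^sup>2) = V"
proof -
  have eq: "(\<lambda>n. q n * (real n - m)\<^sup>2) = (\<lambda>n. ((real n)\<^sup>2 * q n - 2*m * (real n * q n)) + m\<^sup>2 * q n)"
    by (auto simp: fun_eq_iff power2_eq_square algebra_simps)
  have s: "(\<lambda>n. ((real n)\<^sup>2 * q n - 2*m * (real n * q n)) + m\<^sup>2 * q n) sums ((expN2 x - 2*m*m) + m\<^sup>2 * 1)"
    by (intro sums_add sums_diff sums_mult q_sums)
       (use n2_summ n2_sum n1_summ n1_sum in \<open>metis summable_sums\<close>)+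
  show "summable (\<lambda>n. q n * (real n - m)\<^sup>2)" using s eq by (simp add: sums_summable)
  show "(\<Sum>n. q n * (real n - m)\<^sup>2) = V" using s eq sums_unique[OF s] by (simp add: V_def power2_eq_square)
qed

lemma V_nonneg: "V \<ge> 0"
  using var_sum suminf_nonneg[OF var_summ] by (simp add: q_nonneg)


definition C where "C \<theta> = (\<Sum>n. q n * cos (\<theta> * (real n - m)))"
definition S where "S \<theta> = (\<Sum>n. q n * sin (\<theta> * (real n - m)))"

lemma cos_summ: "summable (\<lambda>n. q n * cos (t * (real n - m)))"
  by (rule summable_comparison_test[OF _ q_summ])
     (auto simp: abs_mult q_nonneg intro!: mult_left_le)

lemma sin_summ: "summable (\<lambda>n. q n * sin (t * (real n - m)))"
  by (rule summable_comparison_test[OF _ q_summ])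
     (auto simp: abs_mult q_nonneg intro!: mult_left_le)

lemma C_lower: "C t \<ge> 1 - t\<^sup>2 * V / 2"
proof -
  have s: "(\<lambda>n. q n - (t\<^sup>2/2) * (q n * (real n - m)\<^sup>2)) sums (1 - (t\<^sup>2/2) * V)"
  proof -
    have vs: "(\<lambda>n. q n * (real n - m)\<^sup>2) sums V" using summable_sums[OF var_summ] var_sum by simp
    show ?thesis by (rule sums_diff[OF q_sums sums_mult[OF vs]])
  qed
  have "1 - (t\<^sup>2/2) * V = (\<Sum>n. q n - (t\<^sup>2/2) * (q n * (real n - m)\<^sup>2))"
    using sums_unique[OF s] by simp
  also have "\<dots> \<le> C t" unfolding C_def
  proof (rule suminf_le[OF _ sums_summable[OF s] cos_summ])
    fix n
    have "1 - (t*(real n - m))\<^sup>2/2 \<le> cos (t * (real n - m))"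
      using one_minus_cos_le[of "t*(real n - m)"] by simp
    then have "q n * (1 - (t*(real n - m))\<^sup>2/2) \<le> q n * cos (t * (real n - m))"
      by (intro mult_left_mono q_nonneg)
    show "q n - (t\<^sup>2/2) * (q n * (real n - m)\<^sup>2) \<le> q n * cos (t * (real n - m))"
    proof -
      have "q n * (1 - (t*(real n - m))\<^sup>2/2) = q n - (t\<^sup>2/2) * (q n * (real n - m)\<^sup>2)"
        by (simp add: power2_eq_square field_simps)
      then show ?thesis using \<open>q n * (1 - (t*(real n - m))\<^sup>2/2) \<le> _\<close> by linarith
    qed
  qed
  finally show ?thesis by simp
qed

lemma C_lim: "((\<lambda>t. (1 - C t) / t\<^sup>2) \<longlongrightarrow> V/2) (at 0)"
proof -
  have eq: "(1 - C t) / t\<^sup>2 = (\<Sum>n. q n * ((1 - cos (t * (real n - m))) / t\<^sup>2))" for t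
  proof -
    have "(\<lambda>n. q n - q n * cos (t * (real n - m))) sums (1 - C t)"
      unfolding C_def using q_sums cos_summ by (intro sums_diff) (auto simp: summable_sums)
    then have "(\<lambda>n. (q n - q n * cos (t * (real n - m))) / t\<^sup>2) sums ((1 - C t) / t\<^sup>2)"
      by (rule sums_divide)
    then show ?thesis by (simp add: sums_unique right_diff_distrib)
  qed
  have L: "((\<lambda>t. \<Sum>n. q n * ((1 - cos (t * (real n - m))) / t\<^sup>2)) \<longlongrightarrow>
        (\<Sum>n. q n * ((real n - m) * (real n - m) / 2))) (at 0)"
  proof (rule tannerys_theorem[THEN conjunct2, THEN conjunct2])
    show "((\<lambda>t. q n * ((1 - cos (t * (real n - m))) / t\<^sup>2)) \<longlongrightarrow> q n * ((real n - m) * (real n - m) / 2)) (at 0)" for n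
      by (intro tendsto_intros lim_cos_term)
    show "\<forall>\<^sub>F (n, t) in at_top \<times>\<^sub>F at 0. norm (q n * ((1 - cos (t * (real n - m))) / t\<^sup>2)) \<le> q n * (real n - m)\<^sup>2 / 2"
    proof (rule always_eventually, clarify)
      fix n t
      have a: "0 \<le> 1 - cos (t * (real n - m))" by simp
      have b: "(1 - cos (t * (real n - m))) / t\<^sup>2 \<le> (real n - m)\<^sup>2 / 2"
      proof (cases "t = 0")
        case False
        then show ?thesis using one_minus_cos_le[of "t * (real n - m)"]
          by (simp add: divide_simps power_mult_distrib mult.commute)
      qed simp
      show "norm (q n * ((1 - cos (t * (real n - m))) / t\<^sup>2)) \<le> q n * (real n - m)\<^sup>2 / 2"
        using mult_left_mono[OF b q_nonneg[of n]] a q_nonneg[of n] by (simp add: abs_mult)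
    qed
    show "summable (\<lambda>n. q n * (real n - m)\<^sup>2 / 2)" using var_summ by (rule summable_divide)
  qed simp
  moreover have a: "(\<Sum>n. q n * ((real n - m) * (real n - m) / 2)) = V/2"
    using var_sum suminf_divide[OF var_summ, of 2]
    by (simp add: power2_eq_square)
  ultimately show ?thesis unfolding eq by (simp only: a)
qed

lemma S_lim: "((\<lambda>t. S t / t) \<longlongrightarrow> 0) (at 0)"
proof -
  have eq: "S t / t = (\<Sum>n. q n * (sin (t * (real n - m)) / t))" for t
    unfolding S_def using sums_divide[OF summable_sums[OF sin_summ[of t]], of t]
    by (simp add: sums_unique)
  have M: "summable (\<lambda>n. q n * (real n - m)\<^sup>2 + q n)"
    using var_summ q_summ by (rule summable_add)
  have "((\<lambda>t. \<Sum>n. q n * (sin (t * (real n - m)) / t)) \<longlongrightarrow> (\<Sum>n. q n * (real n - m))) (at 0)"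
  proof (rule tannerys_theorem[THEN conjunct2, THEN conjunct2])
    show "((\<lambda>t. q n * (sin (t * (real n - m)) / t)) \<longlongrightarrow> q n * (real n - m)) (at 0)" for n
      by (intro tendsto_intros lim_sin_term)
    show "\<forall>\<^sub>F (n, t) in at_top \<times>\<^sub>F at 0. norm (q n * (sin (t * (real n - m)) / t)) \<le> q n * (real n - m)\<^sup>2 + q n"
    proof (rule always_eventually, clarify)
      fix n t
      have b: "\<bar>sin (t * (real n - m)) / t\<bar> \<le> \<bar>real n - m\<bar>"
      proof (cases "t = 0")
        case False
        then show ?thesis using abs_sin_x_le_abs_x[of "t * (real n - m)"]
          by (simp add: divide_simps abs_mult mult.commute)
      qed simp
      have c: "\<bar>real n - m\<bar> \<le> (real n - m)\<^sup>2 + 1"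
        using zero_le_power2[of "\<bar>real n - m\<bar> - 1/2"] by (simp add: power2_eq_square algebra_simps)
      show "norm (q n * (sin (t * (real n - m)) / t)) \<le> q n * (real n - m)\<^sup>2 + q n"
        using mult_left_mono[OF order.trans[OF b c] q_nonneg[of n]] q_nonneg[of n]
        by (simp add: abs_mult algebra_simps)
    qed
  qed (use M in simp_all)
  moreover have "(\<Sum>n. q n * (real n - m)) = 0"
  proof -
    have ns: "(\<lambda>n. real n * q n) sums m" using summable_sums[OF n1_summ] n1_sum by simp
    have "(\<lambda>n. real n * q n - m * q n) sums (m - m * 1)"
      by (rule sums_diff[OF ns sums_mult[OF q_sums]])
    then show ?thesis by (simp add: algebra_simps sums_unique[symmetric])
  qed
  ultimately show ?thesis by (simp add: eq)
qed

lemma C_lim1: "(C \<longlongrightarrow> 1) (at 0)"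
proof -
  have "((\<lambda>t. 1 - t\<^sup>2 * ((1 - C t) / t\<^sup>2)) \<longlongrightarrow> 1 - 0\<^sup>2 * (V/2)) (at 0)"
    by (intro tendsto_intros C_lim)
  moreover have "\<forall>\<^sub>F t in at 0. 1 - t\<^sup>2 * ((1 - C t) / t\<^sup>2) = C t"
    by (auto simp: eventually_at_filter)
  ultimately show ?thesis by (simp add: tendsto_cong)
qed

lemma CS_lim: "((\<lambda>t. (1 - ((C t)\<^sup>2 + (S t)\<^sup>2)) / t\<^sup>2) \<longlongrightarrow> V) (at 0)"
proof -
  have "((\<lambda>t. ((1 - C t) / t\<^sup>2) * (1 + C t) - (S t / t)\<^sup>2) \<longlongrightarrow> (V/2) * (1 + 1) - 0\<^sup>2) (at 0)"
    by (intro tendsto_intros C_lim C_lim1 S_lim)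
  moreover have "\<forall>\<^sub>F t in at 0. ((1 - C t) / t\<^sup>2) * (1 + C t) - (S t / t)\<^sup>2 = (1 - ((C t)\<^sup>2 + (S t)\<^sup>2)) / t\<^sup>2"
    by (auto simp: eventually_at_filter divide_simps power2_eq_square algebra_simps)
  ultimately show ?thesis by (simp add: tendsto_cong)
qed


lemma q_has_sum: "(q has_sum 1) UNIV"
  using unit unfolding unit_vec_def q_def by (simp add: fun_eq_iff)

lemma Gm_has_sum: "((\<lambda>n. complex_of_real (q n) * cis (- t * (real n - m))) has_sum
     (cis (t*m) * Gm x t)) UNIV"
proof -
  have qs: "q summable_on UNIV" using q_has_sum by (auto simp: summable_on_def)
  have ab: "(\<lambda>n. norm (complex_of_real (q n) * cis (- t * real n))) summable_on UNIV"
    using qs by (simp add: norm_mult q_nonneg)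
  have g: "Gm x t = infsum (\<lambda>n. complex_of_real (q n) * cis (- t * real n)) UNIV"
    unfolding Gm_def q_def ..
  have "((\<lambda>n. complex_of_real (q n) * cis (- t * real n)) has_sum Gm x t) UNIV"
    unfolding g by (rule has_sum_infsum[OF abs_summable_summable[OF ab]])
  then have h: "((\<lambda>n. cis (t*m) * (complex_of_real (q n) * cis (- t * real n))) has_sum (cis (t*m) * Gm x t)) UNIV"
    by (rule has_sum_cmult_right)
  have eqn: "cis (t*m) * (complex_of_real (q n) * cis (- t * real n)) = complex_of_real (q n) * cis (- t * (real n - m))" for n
  proof -
    have c: "cis (t*m) * cis (- t * real n) = cis (- t * (real n - m))"
      by (subst cis_mult) (simp add: algebra_simps)
    show ?thesis by (metis c mult.left_commute)
  qed
  show ?thesis using h unfolding eqn .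
qed

lemma Gm_Re: "Re (cis (t*m) * Gm x t) = C t"
proof -
  have e: "Re (complex_of_real (q n) * cis (- t * (real n - m))) = q n * cos (t * (real n - m))" for n
    by simp
  have "((\<lambda>n. q n * cos (t * (real n - m))) has_sum Re (cis (t*m) * Gm x t)) UNIV"
    using has_sum_Re[OF Gm_has_sum[of t]] unfolding e .
  from sums_unique[OF has_sum_imp_sums[OF this]] show ?thesis unfolding C_def by simp
qed

lemma Gm_Im: "Im (cis (t*m) * Gm x t) = - S t"
proof -
  have e: "Im (complex_of_real (q n) * cis (- t * (real n - m))) = - (q n * sin (t * (real n - m)))" for n
    by simp
  have "((\<lambda>n. - (q n * sin (t * (real n - m)))) has_sum Im (cis (t*m) * Gm x t)) UNIV"
    using has_sum_Im[OF Gm_has_sum[of t]] unfolding e .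
  from sums_unique[OF has_sum_imp_sums[OF this]] show ?thesis unfolding S_def
    using suminf_minus[OF sin_summ[of t]] by simp
qed

lemma Gm_norm2: "(cmod (Gm x t))\<^sup>2 = (C t)\<^sup>2 + (S t)\<^sup>2"
proof -
  have "cmod (Gm x t) = cmod (cis (t*m) * Gm x t)" by (simp add: norm_mult)
  then show ?thesis using Gm_Re[of t] Gm_Im[of t] by (simp add: cmod_power2)
qed

lemma C_le: "C t \<le> cmod (Gm x t)"
proof -
  have "sqrt ((C t)\<^sup>2 + (S t)\<^sup>2) = cmod (Gm x t)"
    using Gm_norm2[of t] by (intro real_sqrt_unique) auto
  moreover have "C t \<le> sqrt ((C t)\<^sup>2 + (S t)\<^sup>2)" by (rule real_le_rsqrt) simp
  ultimately show ?thesis by simp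
qed

lemma Gm_le1: "cmod (Gm x t) \<le> 1"
proof -
  have "cmod (cis (t*m) * Gm x t) \<le> 1"
    by (rule norm_infsum_le[OF Gm_has_sum q_has_sum]) (simp add: norm_mult q_nonneg)
  then show ?thesis by (simp add: norm_mult)
qed

lemma E1: "1 - cmod (Gm x t) \<le> t\<^sup>2 * V / 2"
  using C_le[of t] C_lower[of t] by linarith

lemma E2: "((\<lambda>t. (1 - (cmod (Gm x t))\<^sup>2) / t\<^sup>2) \<longlongrightarrow> V) (at 0)"
  using CS_lim by (simp add: Gm_norm2)

lemma Vfr_eq: "Vfr x = 4 * V"
  unfolding Vfr_def V_def m_def by simp

end



definition l2 :: "(nat \<Rightarrow> complex) \<Rightarrow> bool" where
  "l2 z \<longleftrightarrow> (\<lambda>n. (cmod (z n))\<^sup>2) summable_on UNIV"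

lemma sq_form:
  "(\<Sum>i\<in>S. \<Sum>j\<in>S. cnj (v i) * (z i * cnj (z j)) * v j) =
     (\<Sum>i\<in>S. cnj (v i) * z i) * cnj (\<Sum>i\<in>S. cnj (v i) * z i)"
proof -
  have "(\<Sum>i\<in>S. cnj (v i) * z i) * cnj (\<Sum>i\<in>S. cnj (v i) * z i) =
        (\<Sum>i\<in>S. cnj (v i) * z i) * (\<Sum>j\<in>S. cnj (cnj (v j) * z j))"
    by (simp only: cnj_sum)
  also have "\<dots> = (\<Sum>i\<in>S. \<Sum>j\<in>S. (cnj (v i) * z i) * cnj (cnj (v j) * z j))"
    by (rule sum_product)
  also have "\<dots> = (\<Sum>i\<in>S. \<Sum>j\<in>S. cnj (v i) * (z i * cnj (z j)) * v j)"
    by (intro sum.cong refl) (simp add: mult_ac)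
  finally show ?thesis by simp
qed

lemma cnj_self_props: "Im (s * cnj s) = 0 \<and> Re (s * cnj s) \<ge> 0"
  by simp

lemma pos_mat_proj: "pos_mat (proj z)"
  unfolding pos_mat_def proj_def Let_def by (simp only: sq_form cnj_self_props simp_thms)

lemma l2_pos_tc: "l2 z \<Longrightarrow> pos_tc (proj z)"
  unfolding pos_tc_def l2_def
proof (intro conjI pos_mat_proj)
  assume "(\<lambda>n. (cmod (z n))\<^sup>2) summable_on UNIV"
  then have "summable (\<lambda>n. (cmod (z n))\<^sup>2)" by (rule summable_on_imp_summable)
  moreover have "Re (proj z n n) = (cmod (z n))\<^sup>2" for n
    unfolding proj_def by (simp flip: complex_norm_square)
  ultimately show "summable (\<lambda>n. Re (proj z n n))" by simp
qed

lemma zero_pos_tc: "pos_tc (\<lambda>i j. 0)"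
  by (simp add: pos_tc_def pos_mat_def)

lemma pos_tc_tc: "pos_tc X \<Longrightarrow> X \<in> trace_class"
  unfolding trace_class_def
  by (rule CollectI, rule exI[of _ X], rule exI[of _ "\<lambda>i j. 0"], rule exI[of _ "\<lambda>i j. 0"], rule exI[of _ "\<lambda>i j. 0"])
     (simp add: zero_pos_tc)

lemma l2_comb: assumes "l2 u" "l2 v" shows "l2 (\<lambda>n. a * u n + b * v n)"
  unfolding l2_def
proof (rule summable_on_comparison_test)
  show "(\<lambda>n. 2 * (cmod a)\<^sup>2 * (cmod (u n))\<^sup>2 + 2 * (cmod b)\<^sup>2 * (cmod (v n))\<^sup>2) summable_on UNIV"
    using assms unfolding l2_def by (intro summable_on_add summable_on_cmult_right)
  fix n
  have "cmod (a * u n + b * v n) \<le> cmod a * cmod (u n) + cmod b * cmod (v n)"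
    by (metis norm_mult norm_triangle_ineq)
  then have "(cmod (a * u n + b * v n))\<^sup>2 \<le> (cmod a * cmod (u n) + cmod b * cmod (v n))\<^sup>2"
    by (simp add: power_mono)
  also have "\<dots> \<le> 2 * (cmod a)\<^sup>2 * (cmod (u n))\<^sup>2 + 2 * (cmod b)\<^sup>2 * (cmod (v n))\<^sup>2"
    using zero_le_power2[of "cmod a * cmod (u n) - cmod b * cmod (v n)"]
    by (simp add: power2_eq_square algebra_simps)
  finally show "(cmod (a * u n + b * v n))\<^sup>2 \<le> 2 * (cmod a)\<^sup>2 * (cmod (u n))\<^sup>2 + 2 * (cmod b)\<^sup>2 * (cmod (v n))\<^sup>2" .
qed simp

lemma polar: fixes a b c d :: complex shows
 "a * cnj d = ((1/2*a + 1/2*b) * cnj (1/2*c + 1/2*d) - (1/2*a + -1/2*b)*cnj(1/2*c + -1/2*d)) + \<i>*((1/2*a + \<i>/2*b)*cnj(1/2*c+ \<i>/2*d) - (1/2*a + -\<i>/2*b)*cnj(1/2*c + -\<i>/2*d))"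
  by (simp add: field_simps)

lemma outer_tc: assumes "l2 u" "l2 v" shows "(\<lambda>i j. u i * cnj (v j)) \<in> trace_class"
proof -
  let ?A = "proj (\<lambda>n. (1/2) * u n + (1/2) * v n)"
  let ?B = "proj (\<lambda>n. (1/2) * u n + (-1/2) * v n)"
  let ?C = "proj (\<lambda>n. (1/2) * u n + (\<i>/2) * v n)"
  let ?D = "proj (\<lambda>n. (1/2) * u n + (-\<i>/2) * v n)"
  have p: "pos_tc ?A" "pos_tc ?B" "pos_tc ?C" "pos_tc ?D"
    using l2_pos_tc[OF l2_comb[OF assms]] by blast+
  have "(\<lambda>i j. u i * cnj (v j)) = (\<lambda>i j. (?A i j - ?B i j) + \<i> * (?C i j - ?D i j))"
    unfolding proj_def by (intro ext) (rule polar)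
  with p show ?thesis unfolding trace_class_def by blast
qed


lemma pos_mat_diag: "pos_mat X \<Longrightarrow> Im (X n n) = 0 \<and> Re (X n n) \<ge> 0"
  unfolding pos_mat_def Let_def
  by (drule spec[of _ "{n}"], drule spec[of _ "\<lambda>_. 1"]) simp

lemma pos_tc_diag_summ: assumes "pos_tc X" shows "(\<lambda>n. X n n) summable_on UNIV"
proof -
  have d: "X n n = complex_of_real (Re (X n n))" for n
    using pos_mat_diag[of X n] assms unfolding pos_tc_def by (simp add: complex_eq_iff)
  have "(\<lambda>n. Re (X n n)) summable_on UNIV"
    using assms pos_mat_diag[of X] unfolding pos_tc_def by (simp add: summable_on_UNIV_nonneg_real_iff)
  then have "(\<lambda>n. complex_of_real (Re (X n n))) summable_on UNIV" by (rule summable_on_of_real)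
  then show ?thesis by (subst d) 
qed

lemma tc_diag_summ: assumes "X \<in> trace_class" shows "(\<lambda>n. X n n) summable_on UNIV"
proof -
  from assms obtain A B C D where p: "pos_tc A" "pos_tc B" "pos_tc C" "pos_tc D"
    and X: "X = (\<lambda>i j. (A i j - B i j) + \<i> * (C i j - D i j))" unfolding trace_class_def by blast
  note s = pos_tc_diag_summ[OF p(1)] pos_tc_diag_summ[OF p(2)] pos_tc_diag_summ[OF p(3)] pos_tc_diag_summ[OF p(4)]
  have "(\<lambda>n. (A n n + - B n n) + \<i> * (C n n + - D n n)) summable_on UNIV"
    by (intro summable_on_add summable_on_cmult_right summable_on_uminus[THEN iffD2] s)
  then show ?thesis unfolding X by simp
qed

lemma sq_form2:
  "(\<Sum>a\<in>K. \<Sum>b\<in>K. \<Sum>i\<in>S. \<Sum>j\<in>S. cnj (v a i) * (z a i * cnj (z b j)) * v b j) =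
     (\<Sum>a\<in>K. \<Sum>i\<in>S. cnj (v a i) * z a i) * cnj (\<Sum>a\<in>K. \<Sum>i\<in>S. cnj (v a i) * z a i)"
proof -
  have "(\<Sum>a\<in>K. \<Sum>i\<in>S. cnj (v a i) * z a i) * cnj (\<Sum>a\<in>K. \<Sum>i\<in>S. cnj (v a i) * z a i) =
        (\<Sum>a\<in>K. \<Sum>i\<in>S. cnj (v a i) * z a i) * (\<Sum>b\<in>K. \<Sum>j\<in>S. cnj (cnj (v b j) * z b j))"
    by (simp only: cnj_sum)
  also have "\<dots> = (\<Sum>a\<in>K. \<Sum>b\<in>K. (\<Sum>i\<in>S. cnj (v a i) * z a i) * (\<Sum>j\<in>S. cnj (cnj (v b j) * z b j)))"
    by (rule sum_product)
  also have "\<dots> = (\<Sum>a\<in>K. \<Sum>b\<in>K. \<Sum>i\<in>S. \<Sum>j\<in>S. (cnj (v a i) * z a i) * cnj (cnj (v b j) * z b j))"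
    by (simp only: sum_product)
  also have "\<dots> = (\<Sum>a\<in>K. \<Sum>b\<in>K. \<Sum>i\<in>S. \<Sum>j\<in>S. cnj (v a i) * (z a i * cnj (z b j)) * v b j)"
    by (intro sum.cong refl) (simp add: mult_ac)
  finally show ?thesis by simp
qed

lemma pos_block_rank1: "pos_block k (\<lambda>a b i j. z a i * cnj (z b j))"
  unfolding pos_block_def Let_def by (simp only: sq_form2 cnj_self_props simp_thms)

definition ev :: "nat \<Rightarrow> complex \<Rightarrow> nat \<Rightarrow> complex \<Rightarrow> nat \<Rightarrow> complex" where
  "ev a x a' x' = (\<lambda>i. (if i = a then x else 0) + (if i = a' then x' else 0))"

lemma sum_ev_right: "finite S \<Longrightarrow> b \<in> S \<Longrightarrow> b' \<in> S \<Longrightarrow>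
   (\<Sum>j\<in>S. g j * ev b y b' y' j) = g b * y + g b' * y'"
  unfolding ev_def by (simp add: distrib_left sum.distrib if_distrib[of "\<lambda>t. g _ * t"] cong: if_cong)

lemma sum_ev_left: "finite S \<Longrightarrow> b \<in> S \<Longrightarrow> b' \<in> S \<Longrightarrow>
   (\<Sum>j\<in>S. cnj (ev b y b' y' j) * g j) = cnj y * g b + cnj y' * g b'"
  unfolding ev_def by (simp add: distrib_right sum.distrib if_distrib[of "\<lambda>t. cnj t * g _"] cong: if_cong)

lemma bf2: "finite S \<Longrightarrow> a \<in> S \<Longrightarrow> a' \<in> S \<Longrightarrow> b \<in> S \<Longrightarrow> b' \<in> S \<Longrightarrow>
  (\<Sum>i\<in>S. \<Sum>j\<in>S. cnj (ev a x a' x' i) * M i j * ev b y b' y' j) =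
    cnj x * (M a b * y + M a b' * y') + cnj x' * (M a' b * y + M a' b' * y')"
proof -
  assume f: "finite S" "a \<in> S" "a' \<in> S" "b \<in> S" "b' \<in> S"
  have "(\<Sum>i\<in>S. \<Sum>j\<in>S. cnj (ev a x a' x' i) * M i j * ev b y b' y' j) =
        (\<Sum>i\<in>S. cnj (ev a x a' x' i) * (M i b * y + M i b' * y'))"
    by (intro sum.cong refl, subst sum_ev_right) (use f in \<open>auto simp: algebra_simps\<close>)
  also have "\<dots> = cnj x * (M a b * y + M a b' * y') + cnj x' * (M a' b * y + M a' b' * y')"
    by (rule sum_ev_left) (use f in auto)
  finally show ?thesis .
qed


lemma block_form:
  fixes x x' y y' :: complex and a a' b b' :: nat
  assumes "pos_block 2 Z"
  defines "F \<equiv> cnj x * (Z 0 0 a a * x + Z 0 0 a a' * x') + cnj x' * (Z 0 0 a' a * x + Z 0 0 a' a' * x')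
   + (cnj x * (Z 0 1 a b * y + Z 0 1 a b' * y') + cnj x' * (Z 0 1 a' b * y + Z 0 1 a' b' * y'))
   + (cnj y * (Z 1 0 b a * x + Z 1 0 b a' * x') + cnj y' * (Z 1 0 b' a * x + Z 1 0 b' a' * x')
   + (cnj y * (Z 1 1 b b * y + Z 1 1 b b' * y') + cnj y' * (Z 1 1 b' b * y + Z 1 1 b' b' * y')))"
  shows "Im F = 0 \<and> Re F \<ge> 0"
proof -
  define S where "S = {a, a', b, b'}"
  define v where "v = (\<lambda>c::nat. if c = 0 then ev a x a' x' else ev b y b' y')"
  have fS: "finite S" "a \<in> S" "a' \<in> S" "b \<in> S" "b' \<in> S" unfolding S_def by auto
  have two: "{..<2::nat} = {0, 1}" by auto
  have "(\<Sum>c<2. \<Sum>d<2. \<Sum>i\<in>S. \<Sum>j\<in>S. cnj (v c i) * Z c d i j * v d j) = F"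
    unfolding two F_def v_def by (simp add: bf2 fS)
  moreover have "let q = (\<Sum>c<2. \<Sum>d<2. \<Sum>i\<in>S. \<Sum>j\<in>S. cnj (v c i) * Z c d i j * v d j)
      in Im q = 0 \<and> Re q \<ge> 0"
    using assms(1) fS(1) unfolding pos_block_def by blast
  ultimately show ?thesis by (simp add: Let_def)
qed




lemma lin_zero: fixes \<alpha> \<beta> :: real assumes h: "\<And>s. s*\<alpha> + s\<^sup>2*\<beta> \<ge> 0" shows "\<alpha> = 0"
proof (rule ccontr)
  assume a: "\<alpha> \<noteq> 0"
  have k: "\<bar>\<alpha>\<bar> \<le> t * \<bar>\<beta>\<bar>" if t: "t > 0" for t
  proof -
    have "t*\<alpha> + t\<^sup>2*\<beta> \<ge> 0" "(-t)*\<alpha> + (-t)\<^sup>2*\<beta> \<ge> 0" using h by blast+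
    then have "t*\<alpha> \<le> t\<^sup>2*\<beta>" "-(t*\<alpha>) \<le> t\<^sup>2*\<beta>" by simp_all
    then have "t*\<bar>\<alpha>\<bar> \<le> t\<^sup>2*\<beta>" using t by (simp add: abs_if)
    also have "t\<^sup>2*\<beta> \<le> t\<^sup>2*\<bar>\<beta>\<bar>" by (simp add: mult_left_mono)
    finally have "t * \<bar>\<alpha>\<bar> \<le> t * (t * \<bar>\<beta>\<bar>)" by (simp add: power2_eq_square)
    then show ?thesis using t by simp
  qed
  define t where "t = \<bar>\<alpha>\<bar> / (2 * (\<bar>\<beta>\<bar> + 1))"
  have tp: "t > 0" using a unfolding t_def by (simp add: add_pos_nonneg)
  have "t * \<bar>\<beta>\<bar> \<le> \<bar>\<alpha>\<bar> / 2"
    unfolding t_def by (simp add: field_simps mult_left_mono)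
  then show False using k[OF tp] a by simp
qed

lemma L0: fixes c d r :: complex
  assumes h: "\<And>y. Im (y*c + cnj y*d + y*cnj y*r) = 0 \<and> Re (y*c + cnj y*d + y*cnj y*r) \<ge> 0"
  shows "c = 0 \<and> d = 0"
proof -
  have r1: "Re (complex_of_real s * c + cnj (complex_of_real s) * d + complex_of_real s * cnj (complex_of_real s) * r)
      = s * Re (c + d) + s\<^sup>2 * Re r" for s by (simp add: power2_eq_square algebra_simps)
  have i1: "Im (complex_of_real s * c + cnj (complex_of_real s) * d + complex_of_real s * cnj (complex_of_real s) * r)
      = s * Im (c + d) + s\<^sup>2 * Im r" for s by (simp add: power2_eq_square algebra_simps)
  have r2: "Re ((\<i> * s) * c + cnj (\<i> * s) * d + (\<i> * s) * cnj (\<i> * s) * r)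
      = s * (- Im (c - d)) + s\<^sup>2 * Re r" for s by (simp add: power2_eq_square algebra_simps)
  have i2: "Im ((\<i> * s) * c + cnj (\<i> * s) * d + (\<i> * s) * cnj (\<i> * s) * r)
      = s * Re (c - d) + s\<^sup>2 * Im r" for s by (simp add: power2_eq_square algebra_simps)
  have "Re (c + d) = 0" by (rule lin_zero[of _ "Re r"]) (metis h r1)
  moreover have "Im (c + d) = 0" by (rule lin_zero[of _ "Im r"]) (metis h i1 order_refl)
  moreover have "Im (c - d) = 0" using lin_zero[of "- Im (c - d)" "Re r"] h r2 by (metis neg_equal_0_iff_equal)
  moreover have "Re (c - d) = 0" by (rule lin_zero[of _ "Im r"]) (metis h i2 order_refl)
  ultimately show ?thesis by (simp add: complex_eq_iff)
qed

lemma L3: fixes p c d r :: complex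
  assumes h: "\<And>y. Im (p + y*c + cnj y*d + y*cnj y*r) = 0 \<and> Re (p + y*c + cnj y*d + y*cnj y*r) \<ge> 0"
    and ip: "Im p = 0" and ir: "Im r = 0" and rp: "Re r > 0"
  shows "(cmod c)\<^sup>2 \<le> Re p * Re r"
proof -
  have "Im (p + c + d + r) = 0" using h[of 1] by simp
  moreover have "Im (p + \<i>*c + cnj \<i>*d + \<i>*cnj \<i>*r) = 0" using h[of \<i>] by blast
  ultimately have dc: "d = cnj c" using ip ir by (simp add: complex_eq_iff)
  define y where "y = - cnj c / complex_of_real (Re r)"
  have rr: "r = complex_of_real (Re r)" using ir by (simp add: complex_eq_iff)
  have "Re (p + y*c + cnj y*d + y*cnj y*r) = Re p - (cmod c)\<^sup>2 / Re r"
    unfolding y_def dc using rp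
    by (subst rr) (simp add: field_simps power2_eq_square complex_norm_square[symmetric] flip: of_real_mult)
  with h[of y] have "Re p - (cmod c)\<^sup>2 / Re r \<ge> 0" by simp
  then show ?thesis using rp by (simp add: field_simps)
qed



definition rotv :: "real \<Rightarrow> (nat \<Rightarrow> complex) \<Rightarrow> nat \<Rightarrow> complex" where
  "rotv t z = (\<lambda>n. cis (t * real n) * z n)"

lemma rot_scaled_proj: "rot t (\<lambda>m n. c * proj z m n) = (\<lambda>m n. c * proj (rotv t z) m n)"
  unfolding rot_def proj_def rotv_def by (auto simp: fun_eq_iff cis_cnj mult_ac)

lemma rot_proj: "rot t (proj z) = proj (rotv t z)"
  using rot_scaled_proj[of t 1 z] by (simp add: fun_eq_iff)

lemma l2_rotv: "l2 z \<Longrightarrow> l2 (rotv t z)"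
  unfolding l2_def rotv_def by (simp add: norm_mult)

lemma unit_l2: "unit_vec z \<Longrightarrow> l2 z"
  unfolding unit_vec_def l2_def summable_on_def by blast

definition Yb :: "(nat \<Rightarrow> complex) \<Rightarrow> real \<Rightarrow> nat \<Rightarrow> nat \<Rightarrow> mat" where
  "Yb \<psi> t = (\<lambda>a b i j. (if a = 0 then \<psi> else rotv t \<psi>) i * cnj ((if b = 0 then \<psi> else rotv t \<psi>) j))"

lemma out_block:
  assumes op: "u1_operation G" and l: "l2 \<psi>"
  shows "pos_block 2 (\<lambda>a b. G (Yb \<psi> t a b))"
proof -
  have cp: "completely_positive G" using op unfolding u1_operation_def by blast
  have d: "pos_tc (Yb \<psi> t a a)" for a
    unfolding Yb_def using l2_pos_tc[OF l] l2_pos_tc[OF l2_rotv[OF l]]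
    by (cases "a = 0") (simp_all add: proj_def)
  have "pos_block 2 (Yb \<psi> t)" unfolding Yb_def by (rule pos_block_rank1)
  with d cp show ?thesis unfolding completely_positive_def by blast
qed

lemma Yb00: "Yb \<psi> t 0 0 = proj \<psi>" by (simp add: Yb_def proj_def)
lemma Yb11: "Yb \<psi> t 1 1 = rot t (proj \<psi>)" unfolding rot_proj by (simp add: Yb_def proj_def)
lemma Yb01: "Yb \<psi> t 0 1 = (\<lambda>i j. \<psi> i * cnj (rotv t \<psi> j))" by (simp add: Yb_def)

lemma G11: assumes op: "u1_operation G" and l: "l2 \<psi>"
  shows "G (Yb \<psi> t 1 1) = rot t (G (proj \<psi>))"
  using op pos_tc_tc[OF l2_pos_tc[OF l]] unfolding u1_operation_def Yb11 by blast


lemma G3: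
  assumes pb: "pos_block 2 Z"
  shows "Im (Z 0 0 a a + y * Z 0 1 a b + cnj y * Z 1 0 b a + y * cnj y * Z 1 1 b b) = 0 \<and>
         Re (Z 0 0 a a + y * Z 0 1 a b + cnj y * Z 1 0 b a + y * cnj y * Z 1 1 b b) \<ge> 0"
proof -
  note bf = block_form[OF pb, where x=1 and x'=0 and y=y and y'=0 and a=a and a'=a and b=b and b'=b]
  have e: "Z 0 0 a a + y * Z 0 1 a b + cnj y * Z 1 0 b a + y * cnj y * Z 1 1 b b =
    cnj 1 * (Z 0 0 a a * 1 + Z 0 0 a a * 0) + cnj 0 * (Z 0 0 a a * 1 + Z 0 0 a a * 0)
   + (cnj 1 * (Z 0 1 a b * y + Z 0 1 a b * 0) + cnj 0 * (Z 0 1 a b * y + Z 0 1 a b * 0))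
   + (cnj y * (Z 1 0 b a * 1 + Z 1 0 b a * 0) + cnj 0 * (Z 1 0 b a * 1 + Z 1 0 b a * 0)
   + (cnj y * (Z 1 1 b b * y + Z 1 1 b b * 0) + cnj 0 * (Z 1 1 b b * y + Z 1 1 b b * 0)))"
    by (simp add: algebra_simps)
  show ?thesis unfolding e by (rule bf)
qed

lemma G3diag: "pos_block 2 Z \<Longrightarrow> Im (Z 0 0 a a) = 0 \<and> Re (Z 0 0 a a) \<ge> 0"
  using G3[of Z a 0 a] by simp

lemma per_mu_pos:
  assumes op: "u1_operation G" and l: "l2 \<psi>" and wp: "w > 0" and u: "unit_vec \<phi>"
    and P: "G (proj \<psi>) = (\<lambda>m n. complex_of_real w * proj \<phi> m n)"
  shows "cmod (trace (G (\<lambda>i j. \<psi> i * cnj (rotv t \<psi> j)))) \<le> w * cmod (Gm \<phi> t)"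
proof -
  define Z where "Z = (\<lambda>a b. G (Yb \<psi> t a b))"
  have pb: "pos_block 2 Z" using out_block[OF op l] unfolding Z_def .
  define \<phi>t where "\<phi>t = rotv t \<phi>"
  have Z00: "Z 0 0 = (\<lambda>m n. of_real w * proj \<phi> m n)" unfolding Z_def Yb00 P ..
  have Z11: "Z 1 1 = (\<lambda>m n. of_real w * proj \<phi>t m n)" unfolding Z_def G11[OF op l] P rot_scaled_proj \<phi>t_def ..
  have BX: "Z 0 1 = G (\<lambda>i j. \<psi> i * cnj (rotv t \<psi> j))" unfolding Z_def Yb01 ..
  have T1: "\<phi> a' * Z 0 1 a b - \<phi> a * Z 0 1 a' b = 0" for a a' b
  proof -
    have "\<phi> a' * Z 0 1 a b - \<phi> a * Z 0 1 a' b = 0 \<and> Z 1 0 b a * cnj (\<phi> a') - Z 1 0 b a' * cnj (\<phi> a) = 0"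
    proof (rule L0)
      fix y
      note bf = block_form[OF pb, where x="cnj (\<phi> a')" and x'="- cnj (\<phi> a)" and y=y and y'=0 and a=a and a'=a' and b=b and b'=b]
      have e: "y * (\<phi> a' * Z 0 1 a b - \<phi> a * Z 0 1 a' b) + cnj y * (Z 1 0 b a * cnj (\<phi> a') - Z 1 0 b a' * cnj (\<phi> a)) + y * cnj y * Z 1 1 b b
         = cnj (cnj (\<phi> a')) * (Z 0 0 a a * cnj (\<phi> a') + Z 0 0 a a' * - cnj (\<phi> a)) + cnj (- cnj (\<phi> a)) * (Z 0 0 a' a * cnj (\<phi> a') + Z 0 0 a' a' * - cnj (\<phi> a))
   + (cnj (cnj (\<phi> a')) * (Z 0 1 a b * y + Z 0 1 a b * 0) + cnj (- cnj (\<phi> a)) * (Z 0 1 a' b * y + Z 0 1 a' b * 0))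
   + (cnj y * (Z 1 0 b a * cnj (\<phi> a') + Z 1 0 b a' * - cnj (\<phi> a)) + cnj 0 * (Z 1 0 b a * cnj (\<phi> a') + Z 1 0 b a' * - cnj (\<phi> a))
   + (cnj y * (Z 1 1 b b * y + Z 1 1 b b * 0) + cnj 0 * (Z 1 1 b b * y + Z 1 1 b b * 0)))"
        unfolding Z00 proj_def by (simp add: algebra_simps)
      show "Im (y * (\<phi> a' * Z 0 1 a b - \<phi> a * Z 0 1 a' b) + cnj y * (Z 1 0 b a * cnj (\<phi> a') - Z 1 0 b a' * cnj (\<phi> a)) + y * cnj y * Z 1 1 b b) = 0 \<and>
         0 \<le> Re (y * (\<phi> a' * Z 0 1 a b - \<phi> a * Z 0 1 a' b) + cnj y * (Z 1 0 b a * cnj (\<phi> a') - Z 1 0 b a' * cnj (\<phi> a)) + y * cnj y * Z 1 1 b b)"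
        unfolding e by (rule bf)
    qed
    then show ?thesis by blast
  qed
  have T2: "Z 0 1 a b * cnj (\<phi>t b') - Z 0 1 a b' * cnj (\<phi>t b) = 0" for a b b'
  proof -
    have "Z 0 1 a b * cnj (\<phi>t b') - Z 0 1 a b' * cnj (\<phi>t b) = 0 \<and> Z 1 0 b a * \<phi>t b' - Z 1 0 b' a * \<phi>t b = 0"
    proof (rule L0)
      fix y
      note bf = block_form[OF pb, where x="cnj y" and x'=0 and y="cnj (\<phi>t b')" and y'="- cnj (\<phi>t b)" and a=a and a'=a and b=b and b'=b']
      have e: "y * (Z 0 1 a b * cnj (\<phi>t b') - Z 0 1 a b' * cnj (\<phi>t b)) + cnj y * (Z 1 0 b a * \<phi>t b' - Z 1 0 b' a * \<phi>t b) + y * cnj y * Z 0 0 a a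
         = cnj (cnj y) * (Z 0 0 a a * cnj y + Z 0 0 a a * 0) + cnj 0 * (Z 0 0 a a * cnj y + Z 0 0 a a * 0)
   + (cnj (cnj y) * (Z 0 1 a b * cnj (\<phi>t b') + Z 0 1 a b' * - cnj (\<phi>t b)) + cnj 0 * (Z 0 1 a b * cnj (\<phi>t b') + Z 0 1 a b' * - cnj (\<phi>t b)))
   + (cnj (cnj (\<phi>t b')) * (Z 1 0 b a * cnj y + Z 1 0 b a * 0) + cnj (- cnj (\<phi>t b)) * (Z 1 0 b' a * cnj y + Z 1 0 b' a * 0)
   + (cnj (cnj (\<phi>t b')) * (Z 1 1 b b * cnj (\<phi>t b') + Z 1 1 b b' * - cnj (\<phi>t b)) + cnj (- cnj (\<phi>t b)) * (Z 1 1 b' b * cnj (\<phi>t b') + Z 1 1 b' b' * - cnj (\<phi>t b))))"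
        unfolding Z11 proj_def by (simp add: algebra_simps)
      show "Im (y * (Z 0 1 a b * cnj (\<phi>t b') - Z 0 1 a b' * cnj (\<phi>t b)) + cnj y * (Z 1 0 b a * \<phi>t b' - Z 1 0 b' a * \<phi>t b) + y * cnj y * Z 0 0 a a) = 0 \<and>
         0 \<le> Re (y * (Z 0 1 a b * cnj (\<phi>t b') - Z 0 1 a b' * cnj (\<phi>t b)) + cnj y * (Z 1 0 b a * \<phi>t b' - Z 1 0 b' a * \<phi>t b) + y * cnj y * Z 0 0 a a)"
        unfolding e by (rule bf)
    qed
    then show ?thesis by blast
  qed
  have "\<exists>k. \<phi> k \<noteq> 0"
  proof (rule ccontr)
    assume "\<not> (\<exists>k. \<phi> k \<noteq> 0)"
    then have "\<And>n. \<phi> n = 0" by blast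
    then have "((\<lambda>n. (cmod (\<phi> n))\<^sup>2) has_sum 0) UNIV" by simp
    from has_sum_unique[OF this u[unfolded unit_vec_def]] show False by simp
  qed
  then obtain k where k: "\<phi> k \<noteq> 0" by blast
  have nt: "cmod (\<phi>t n) = cmod (\<phi> n)" for n unfolding \<phi>t_def rotv_def by (simp add: norm_mult)
  have k2: "\<phi>t k \<noteq> 0" using nt[of k] k by auto
  have z00: "Z 0 0 k k = complex_of_real (w * (cmod (\<phi> k))\<^sup>2)"
    unfolding Z00 proj_def by (simp flip: complex_norm_square)
  have z11: "Z 1 1 k k = complex_of_real (w * (cmod (\<phi> k))\<^sup>2)"
    unfolding Z11 proj_def using nt[of k] by (simp flip: complex_norm_square)
  have pos: "w * (cmod (\<phi> k))\<^sup>2 > 0" using wp k by simp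
  have T3: "(cmod (Z 0 1 k k))\<^sup>2 \<le> Re (Z 0 0 k k) * Re (Z 1 1 k k)"
    by (rule L3[OF G3[OF pb]]) (use z00 z11 pos in simp_all)
  then have "(cmod (Z 0 1 k k))\<^sup>2 \<le> (w * (cmod (\<phi> k))\<^sup>2)\<^sup>2"
    using z00 z11 by (simp add: power2_eq_square)
  then have T3': "cmod (Z 0 1 k k) \<le> w * (cmod (\<phi> k))\<^sup>2"
    by (rule power2_le_imp_le[OF _ less_imp_le[OF pos]])
  define lam where "lam = Z 0 1 k k / (\<phi> k * cnj (\<phi>t k))"
  have diag: "Z 0 1 n n = lam * (\<phi> n * cnj (\<phi>t n))" for n
  proof -
    have a: "\<phi> k * Z 0 1 n n = \<phi> n * Z 0 1 k n" using T1[of k n n] by simp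
    have b: "Z 0 1 k n * cnj (\<phi>t k) = Z 0 1 k k * cnj (\<phi>t n)" using T2[of k n k] by simp
    have "Z 0 1 n n = \<phi> n * Z 0 1 k n / \<phi> k" using a k by (simp add: field_simps)
    also have "Z 0 1 k n = Z 0 1 k k * cnj (\<phi>t n) / cnj (\<phi>t k)" using b k2 by (simp add: field_simps)
    finally show ?thesis unfolding lam_def using k k2 by (simp add: field_simps)
  qed
  have dg: "\<phi> n * cnj (\<phi>t n) = complex_of_real ((cmod (\<phi> n))\<^sup>2) * cis (- t * real n)" for n
    unfolding \<phi>t_def rotv_def by (simp add: cis_cnj mult_ac flip: complex_norm_square)
  have tr: "trace (Z 0 1) = lam * Gm \<phi> t"
    unfolding trace_def Gm_def diag dg by (rule infsum_cmult_right')
  have "cmod lam \<le> w"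
  proof -
    have "cmod lam = cmod (Z 0 1 k k) / (cmod (\<phi> k))\<^sup>2"
      unfolding lam_def using nt[of k] by (simp add: norm_divide norm_mult power2_eq_square)
    also have "\<dots> \<le> w" using T3' k by (simp add: divide_le_eq)
    finally show ?thesis .
  qed
  then have "cmod (trace (Z 0 1)) \<le> w * cmod (Gm \<phi> t)"
    unfolding tr norm_mult by (simp add: mult_right_mono)
  then show ?thesis unfolding BX .
qed


lemma op_tc: "u1_operation G \<Longrightarrow> X \<in> trace_class \<Longrightarrow> G X \<in> trace_class"
  unfolding u1_operation_def linear_tc_def by blast

lemma weight_nonneg:
  assumes op: "u1_operation G" and l: "l2 \<psi>"
  shows "Re (trace (G (proj \<psi>))) \<ge> 0"
proof -
  have pb: "pos_block 2 (\<lambda>a b. G (Yb \<psi> t a b))" by (rule out_block[OF op l])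
  have d: "Re (G (proj \<psi>) n n) \<ge> 0" for n using G3diag[OF pb, of n] by (simp add: Yb00)
  have sm: "(\<lambda>n. G (proj \<psi>) n n) summable_on UNIV"
    by (rule tc_diag_summ[OF op_tc[OF op pos_tc_tc[OF l2_pos_tc[OF l]]]])
  show ?thesis unfolding trace_def infsum_Re[OF sm, symmetric] by (rule infsum_nonneg) (use d in simp)
qed

lemma per_mu_zero:
  assumes op: "u1_operation G" and l: "l2 \<psi>" and w0: "Re (trace (G (proj \<psi>))) \<le> 0"
  shows "trace (G (\<lambda>i j. \<psi> i * cnj (rotv t \<psi> j))) = 0"
proof -
  define Z where "Z = (\<lambda>a b. G (Yb \<psi> t a b))"
  have pb: "pos_block 2 Z" using out_block[OF op l] unfolding Z_def .
  have Z0: "Z 0 0 = G (proj \<psi>)" unfolding Z_def Yb00 ..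
  have sm: "(\<lambda>n. Z 0 0 n n) summable_on UNIV"
    unfolding Z0 by (rule tc_diag_summ[OF op_tc[OF op pos_tc_tc[OF l2_pos_tc[OF l]]]])
  have d: "Im (Z 0 0 n n) = 0 \<and> Re (Z 0 0 n n) \<ge> 0" for n using G3diag[OF pb, of n] .
  have r0: "Re (Z 0 0 n n) = 0" for n
  proof (rule nonneg_infsum_le_0D[where A=UNIV and f="\<lambda>n. Re (Z 0 0 n n)" and x=n])
    show "infsum (\<lambda>n. Re (Z 0 0 n n)) UNIV \<le> 0"
      using w0 infsum_Re[OF sm] unfolding Z0 trace_def by simp
  qed (use summable_on_Re[OF sm] d in auto)
  have z: "Z 0 0 n n = 0" for n using r0[of n] d[of n] by (simp add: complex_eq_iff)
  have B0: "Z 0 1 a b = 0" for a b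
  proof -
    have "Z 0 1 a b = 0 \<and> Z 1 0 b a = 0"
    proof (rule L0)
      fix y
      show "Im (y * Z 0 1 a b + cnj y * Z 1 0 b a + y * cnj y * Z 1 1 b b) = 0 \<and>
            0 \<le> Re (y * Z 0 1 a b + cnj y * Z 1 0 b a + y * cnj y * Z 1 1 b b)"
        using G3[OF pb, of a y b] unfolding z by (simp only: add_0_left add.assoc)
    qed
    then show ?thesis by blast
  qed
  have "G (\<lambda>i j. \<psi> i * cnj (rotv t \<psi> j)) = Z 0 1" unfolding Z_def Yb01 ..
  then show ?thesis unfolding trace_def using B0 by simp
qed




lemma zcz: "z * cnj z = complex_of_real ((cmod z)\<^sup>2)" by (rule complex_norm_square[symmetric])

lemma trace_X: "trace (\<lambda>i j. \<psi> i * cnj (rotv t \<psi> j)) = Gm \<psi> t"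
proof -
  have "\<psi> n * cnj (rotv t \<psi> n) = (\<psi> n * cnj (\<psi> n)) * cis (- t * real n)" for n
    unfolding rotv_def by (simp add: cis_cnj mult_ac)
  then show ?thesis unfolding trace_def Gm_def zcz by simp
qed

lemma trace_proj_Re: assumes "unit_vec \<psi>" shows "Re (trace (proj \<psi>)) = 1"
proof -
  have h: "((\<lambda>n. (cmod (\<psi> n))\<^sup>2) has_sum 1) UNIV" using assms unfolding unit_vec_def .
  have hs: "((\<lambda>n. complex_of_real ((cmod (\<psi> n))\<^sup>2)) has_sum complex_of_real 1) UNIV"
    by (rule has_sum_of_real[OF h])
  have "trace (proj \<psi>) = complex_of_real 1"
    unfolding trace_def proj_def zcz by (rule infsumI[OF hs])
  then show ?thesis by simp
qed

theorem lemma8: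
  fixes E :: "'m::countable \<Rightarrow> mat \<Rightarrow> mat"
    and \<psi> :: "nat \<Rightarrow> complex"
    and \<phi> :: "'m \<Rightarrow> nat \<Rightarrow> complex"
  assumes "u1_measurement E"
    and "unit_vec \<psi>" and "fin_N2 \<psi>"
    and "\<forall>\<mu>. outcome_weight E \<psi> \<mu> > 0 \<longrightarrow>
           unit_vec (\<phi> \<mu>) \<and> fin_N2 (\<phi> \<mu>) \<and>
           E \<mu> (proj \<psi>) = (\<lambda>m n. complex_of_real (outcome_weight E \<psi> \<mu>) * proj (\<phi> \<mu>) m n)"
  shows "(\<lambda>\<mu>. outcome_weight E \<psi> \<mu> * Vfr (\<phi> \<mu>)) summable_on {\<mu>. outcome_weight E \<psi> \<mu> > 0}
    \<and> (\<Sum>\<^sub>\<infinity>\<mu>\<in>{\<mu>. outcome_weight E \<psi> \<mu> > 0}. outcome_weight E \<psi> \<mu> * Vfr (\<phi> \<mu>)) \<le> Vfr \<psi>"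
proof -
  define w where "w = outcome_weight E \<psi>"
  define W where "W = {\<mu>. w \<mu> > 0}"
  have meas: "\<forall>\<mu>. u1_operation (E \<mu>)"
    and msum: "\<And>X. X \<in> trace_class \<Longrightarrow> ((\<lambda>\<mu>. trace (E \<mu> X)) has_sum trace X) UNIV"
    using assms(1) unfolding u1_measurement_def by blast+
  have l\<psi>: "l2 \<psi>" using assms(2) by (rule unit_l2)
  have u\<psi>: "uvec \<psi>" using assms(2,3) by unfold_locales
  have H: "\<And>\<mu>. \<mu> \<in> W \<Longrightarrow> uvec (\<phi> \<mu>) \<and> unit_vec (\<phi> \<mu>) \<and>
     E \<mu> (proj \<psi>) = (\<lambda>m n. complex_of_real (w \<mu>) * proj (\<phi> \<mu>) m n)"
    using assms(4) unfolding W_def w_def by (auto intro: uvec.intro)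
  have w_nn: "w \<mu> \<ge> 0" for \<mu>
    unfolding w_def outcome_weight_def by (rule weight_nonneg[OF meas[rule_format] l\<psi>])
  have w_sum: "(w has_sum 1) UNIV"
  proof -
    have "((\<lambda>\<mu>. Re (trace (E \<mu> (proj \<psi>)))) has_sum Re (trace (proj \<psi>))) UNIV"
      by (rule has_sum_Re[OF msum[OF pos_tc_tc[OF l2_pos_tc[OF l\<psi>]]]])
    then show ?thesis unfolding trace_proj_Re[OF assms(2)] w_def outcome_weight_def .
  qed
  define h where "h t \<mu> = (if \<mu> \<in> W then w \<mu> * cmod (Gm (\<phi> \<mu>) t) else 0)" for t \<mu>
  have h_le: "0 \<le> h t \<mu> \<and> h t \<mu> \<le> w \<mu>" for t \<mu>
  proof (cases "\<mu> \<in> W")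
    case True
    then have "cmod (Gm (\<phi> \<mu>) t) \<le> 1" using H uvec.Gm_le1 by blast
    then show ?thesis using True w_nn[of \<mu>] unfolding h_def by (simp add: mult_left_le)
  qed (simp add: h_def w_nn)
  have hs: "h t summable_on UNIV" for t
    by (rule summable_on_comparison_test[of w]) (use w_sum h_le in \<open>auto simp: summable_on_def\<close>)
  have key: "1 - cmod (Gm \<psi> t) \<ge> infsum (\<lambda>\<mu>. w \<mu> - h t \<mu>) UNIV" for t
  proof -
    define X where "X = (\<lambda>i j. \<psi> i * cnj (rotv t \<psi> j))"
    have Xtc: "X \<in> trace_class" unfolding X_def by (rule outer_tc[OF l\<psi> l2_rotv[OF l\<psi>]])
    have bound: "cmod (trace (E \<mu> X)) \<le> h t \<mu>" for \<mu>
    proof (cases "\<mu> \<in> W")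
      case True
      then show ?thesis unfolding h_def X_def
        using per_mu_pos[OF meas[rule_format] l\<psi> _ _ conjunct2[OF conjunct2[OF H]]] True H
        unfolding W_def by auto
    next
      case False
      then have "Re (trace (E \<mu> (proj \<psi>))) \<le> 0" unfolding W_def w_def outcome_weight_def by simp
      then show ?thesis unfolding h_def X_def using False per_mu_zero[OF meas[rule_format] l\<psi>] by simp
    qed
    have "cmod (Gm \<psi> t) \<le> infsum (h t) UNIV"
      using norm_infsum_le[OF msum[OF Xtc] has_sum_infsum[OF hs] bound] unfolding X_def trace_X .
    moreover have "infsum (\<lambda>\<mu>. w \<mu> - h t \<mu>) UNIV = 1 - infsum (h t) UNIV"
    proof -
      have "((\<lambda>\<mu>. w \<mu> + - h t \<mu>) has_sum (1 + - infsum (h t) UNIV)) UNIV"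
        by (intro has_sum_add w_sum) (simp add: has_sum_uminus hs)
      then show ?thesis by (simp add: infsumI)
    qed
    ultimately show ?thesis by simp
  qed
  have fin_bound: "(\<Sum>\<mu>\<in>F. w \<mu> * uvec.V (\<phi> \<mu>)) \<le> uvec.V \<psi>" if F: "finite F" "F \<subseteq> W" for F
  proof -
    have ineq: "(\<Sum>\<mu>\<in>F. w \<mu> * ((1 - (cmod (Gm (\<phi> \<mu>) t))\<^sup>2) / t\<^sup>2)) \<le> uvec.V \<psi>" if t: "t \<noteq> 0" for t
    proof -
      have ds: "(\<lambda>\<mu>. w \<mu> - h t \<mu>) summable_on UNIV"
      proof -
        have "((\<lambda>\<mu>. w \<mu> + - h t \<mu>) has_sum (1 + - infsum (h t) UNIV)) UNIV"
          by (intro has_sum_add w_sum) (simp add: has_sum_uminus hs)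
        then show ?thesis by (auto simp: summable_on_def)
      qed
      have "(\<Sum>\<mu>\<in>F. w \<mu> * (1 - (cmod (Gm (\<phi> \<mu>) t))\<^sup>2) / 2) \<le> (\<Sum>\<mu>\<in>F. w \<mu> - h t \<mu>)"
      proof (rule sum_mono)
        fix \<mu> assume m: "\<mu> \<in> F"
        then have mW: "\<mu> \<in> W" using F by blast
        have g1: "cmod (Gm (\<phi> \<mu>) t) \<le> 1" using H[OF mW] uvec.Gm_le1 by blast
        have "(1 - (cmod (Gm (\<phi> \<mu>) t))\<^sup>2) / 2 \<le> 1 - cmod (Gm (\<phi> \<mu>) t)"
          using zero_le_power2[of "1 - cmod (Gm (\<phi> \<mu>) t)"]
          by (simp add: power2_eq_square field_simps)
        then have "w \<mu> * ((1 - (cmod (Gm (\<phi> \<mu>) t))\<^sup>2) / 2) \<le> w \<mu> * (1 - cmod (Gm (\<phi> \<mu>) t))"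
          by (rule mult_left_mono[OF _ w_nn])
        then show "w \<mu> * (1 - (cmod (Gm (\<phi> \<mu>) t))\<^sup>2) / 2 \<le> w \<mu> - h t \<mu>"
          unfolding h_def using mW by (simp add: algebra_simps)
      qed
      also have "\<dots> \<le> infsum (\<lambda>\<mu>. w \<mu> - h t \<mu>) UNIV"
        by (rule finite_sum_le_infsum[OF ds F(1)]) (use h_le in auto)
      also have "\<dots> \<le> 1 - cmod (Gm \<psi> t)" by (rule key)
      also have "\<dots> \<le> t\<^sup>2 * uvec.V \<psi> / 2" by (rule uvec.E1[OF u\<psi>])
      finally have "(\<Sum>\<mu>\<in>F. w \<mu> * (1 - (cmod (Gm (\<phi> \<mu>) t))\<^sup>2) / 2) \<le> t\<^sup>2 * uvec.V \<psi> / 2" .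
      then have "(\<Sum>\<mu>\<in>F. w \<mu> * (1 - (cmod (Gm (\<phi> \<mu>) t))\<^sup>2)) / t\<^sup>2 \<le> uvec.V \<psi>"
        using t by (simp add: sum_divide_distrib[symmetric] divide_le_eq mult.commute)
      then show ?thesis by (simp add: sum_divide_distrib)
    qed
    have lim: "((\<lambda>t. \<Sum>\<mu>\<in>F. w \<mu> * ((1 - (cmod (Gm (\<phi> \<mu>) t))\<^sup>2) / t\<^sup>2)) \<longlongrightarrow> (\<Sum>\<mu>\<in>F. w \<mu> * uvec.V (\<phi> \<mu>))) (at 0)"
    proof (intro tendsto_sum tendsto_mult tendsto_const)
      fix \<mu> assume "\<mu> \<in> F"
      then have "uvec (\<phi> \<mu>)" using F H by blast
      then show "((\<lambda>t. (1 - (cmod (Gm (\<phi> \<mu>) t))\<^sup>2) / t\<^sup>2) \<longlongrightarrow> uvec.V (\<phi> \<mu>)) (at 0)"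
        by (rule uvec.E2)
    qed
    have ev: "\<forall>\<^sub>F t in at 0. (\<Sum>\<mu>\<in>F. w \<mu> * ((1 - (cmod (Gm (\<phi> \<mu>) t))\<^sup>2) / t\<^sup>2)) \<le> uvec.V \<psi>"
      unfolding eventually_at_filter by (intro always_eventually allI impI, erule ineq)
    show ?thesis
      by (rule tendsto_upperbound[OF lim ev]) simp
  qed
  have Vfr_eq: "w \<mu> * Vfr (\<phi> \<mu>) = 4 * (w \<mu> * uvec.V (\<phi> \<mu>))" if "\<mu> \<in> W" for \<mu>
    using H[OF that] uvec.Vfr_eq by (simp add: mult_ac)
  have nn: "w \<mu> * Vfr (\<phi> \<mu>) \<ge> 0" if "\<mu> \<in> W" for \<mu>
  proof -
    have "uvec.V (\<phi> \<mu>) \<ge> 0" using H[OF that] uvec.V_nonneg by blast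
    then show ?thesis unfolding Vfr_eq[OF that] using w_nn[of \<mu>] by simp
  qed
  have fs: "(\<Sum>\<mu>\<in>F. w \<mu> * Vfr (\<phi> \<mu>)) \<le> Vfr \<psi>" if "finite F" "F \<subseteq> W" for F
  proof -
    have "(\<Sum>\<mu>\<in>F. w \<mu> * Vfr (\<phi> \<mu>)) = 4 * (\<Sum>\<mu>\<in>F. w \<mu> * uvec.V (\<phi> \<mu>))"
      unfolding sum_distrib_left using that by (intro sum.cong refl Vfr_eq) blast
    also have "\<dots> \<le> 4 * uvec.V \<psi>" using fin_bound[OF that] by simp
    also have "\<dots> = Vfr \<psi>" using uvec.Vfr_eq[OF u\<psi>] by simp
    finally show ?thesis .
  qed
  have sW: "(\<lambda>\<mu>. w \<mu> * Vfr (\<phi> \<mu>)) summable_on W"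
    by (rule nonneg_bdd_above_summable_on) (use nn fs in \<open>auto intro!: bdd_aboveI2\<close>)
  have "infsum (\<lambda>\<mu>. w \<mu> * Vfr (\<phi> \<mu>)) W \<le> Vfr \<psi>"
    by (rule infsum_le_finite_sums[OF sW fs])
  with sW show ?thesis unfolding W_def w_def by blast
qed


end
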